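(* If a configuration $(\mu,s)$ is stable under no observability for the objective game $G$, then its aggregate outcome $x(\mu,s)$ is a Nash equilibrium of $G$.
   Context: Objective game: $G=(N,A,\pi)$ is a finite $n$-player normal-form game, $N=\{1,\dots,n\}$, finite action sets $A_i$, $A=\prod_iA_i$, fitness functions $\pi_i:A\to\mathbb{R}$ extended multilinearly to $\prod_i\Delta(A_i)$. Preference types: $\Theta=\mathbb{R}^A$ (extended multilinearly). $\mathcal{M}(\Theta^n)$: product distributions $\mu=\mu_1\times\dots\times\mu_n$ on $\Theta^n$ with finitely supported marginals; $\operatorname{supp}\mu=\prod_i\operatorname{supp}\mu_i$, $\mu_{-i}(\theta_{-i})=\prod_{j\neq i}\mu_j(\theta_j)$. Mutants: for nonempty $J\subseteq N$, a mutant sub-profile is $\tilde\theta_J\in\prod_{j\in J}(\Theta\setminus\operatorname{supp}\mu_j)$ with shares $\varepsilon\in(0,1)^{|J|}$, $\|\varepsilon\|=\max_j\varepsilon_j$; post-entry $\tilde\mu^\varepsilon_i=(1-\varepsilon_i)\mu_i+\varepsilon_i\delta_{\tilde\theta_i}$ for $i\in J$, $\tilde\mu^\varepsilon_i=\mu_i$ otherwise. No observability: a strategy of player $i$ is $s_i:\operatorname{supp}\mu_i\to\Delta(A_i)$, $s(\theta)=(s_1(\theta_1),\dots,s_n(\theta_n))$; $s$ is a Bayesian–Nash equilibrium if for each $i$ and $\theta_i\in\operatorname{supp}\mu_i$, $s_i(\theta_i)\in\arg\max_{\sigma_i\in\Delta(A_i)}\sum_{\theta'_{-i}\in\operatorname{supp}\mu_{-i}}\mu_{-i}(\theta'_{-i})\theta_i(\sigma_i,s_{-i}(\theta'_{-i}))$;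 $B_0(\mu)$ is the set of these; $(\mu,s)$ with $s\in B_0(\mu)$ is a configuration, with aggregate outcome $x(\mu,s)=\big(\sum_{\theta_i}\mu_i(\theta_i)s_i(\theta_i)\big)_{i}$. Average fitness: $\Pi_{\theta_i}(\mu;s)=\pi_i(s_i(\theta_i),x(\mu,s)_{-i})$. Balanced: all types in each $\operatorname{supp}\mu_i$ have equal average fitness. Nearby set: for $\eta\ge0$, $B_0^\eta(\tilde\mu^\varepsilon;s)=\{\tilde s\in B_0(\tilde\mu^\varepsilon):\max_{i}\|\tilde s_i(\theta_i)-s_i(\theta_i)\|\le\eta\ \forall\theta\in\operatorname{supp}\mu\}$ (Euclidean norm). $(\mu,s)$ is stable if it is balanced and for every nonempty $J\subseteq N$, every $\tilde\theta_J$ and every $\eta>0$ there exist $\bar\eta\in[0,\eta)$ and $\bar\epsilon\in(0,1)$ such that for every $\varepsilon$ with $\|\varepsilon\|\in(0,\bar\epsilon)$, $B_0^{\bar\eta}(\tilde\mu^\varepsilon;s)\neq\emptyset$ and every $\tilde s\in B_0^{\bar\eta}(\tilde\mu^\varepsilon;s)$ satisfies either (i) some $j\in J$ has $\Pi_{\theta_j}(\tilde\mu^\varepsilon;\tilde s)>\Pi_{\tilde\theta_j}(\tilde\mu^\varepsilon;\tilde s)$ for all $\theta_j\in\operatorname{supp}\mu_j$, or (ii) for every $i$ all types in $\operatorname{supp}\tilde\mu^\varepsilon_i$ have equal average fitness under $(\tilde\mu^\varepsilon,\tilde s)$. *)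

theory Defs
  imports Complex_Main "HOL-Library.FuncSet"
begin

text \<open>Pure profiles are functions 'i => 'a; a preference type (element of R^A) is a real
  function on pure profiles that vanishes outside Pi A (so that Theta is exactly R^A).\<close>

type_synonym ('i, 'a) pref = "('i \<Rightarrow> 'a) \<Rightarrow> real"

definition simplex :: "'a set \<Rightarrow> ('a \<Rightarrow> real) set" where
  "simplex S = {\<sigma>. (\<forall>a. 0 \<le> \<sigma> a) \<and> (\<forall>a. a \<notin> S \<longrightarrow> \<sigma> a = 0) \<and> sum \<sigma> S = 1}"

definition mlin :: "('i::finite \<Rightarrow> 'a set) \<Rightarrow> ('i, 'a) pref \<Rightarrow> ('i \<Rightarrow> 'a \<Rightarrow> real) \<Rightarrow> real" where
  "mlin A u \<sigma> = (\<Sum>a\<in>Pi\<^sub>E UNIV A. (\<Prod>i\<in>UNIV. \<sigma> i (a i)) * u a)"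

definition Theta :: "('i \<Rightarrow> 'a set) \<Rightarrow> ('i, 'a) pref set" where
  "Theta A = {\<theta>. \<forall>a. a \<notin> Pi\<^sub>E UNIV A \<longrightarrow> \<theta> a = 0}"

definition dsupp :: "('b \<Rightarrow> real) \<Rightarrow> 'b set" where
  "dsupp f = {t. f t \<noteq> 0}"

text \<open>mu i is the marginal distribution over types of player i (finitely supported);
  the type distribution is the product of the marginals.\<close>
definition is_dist :: "('i \<Rightarrow> 'a set) \<Rightarrow> ('i \<Rightarrow> ('i, 'a) pref \<Rightarrow> real) \<Rightarrow> bool" where
  "is_dist A \<mu> = (\<forall>i. finite (dsupp (\<mu> i)) \<and> dsupp (\<mu> i) \<subseteq> Theta A \<and>
      (\<forall>t. 0 \<le> \<mu> i t) \<and> sum (\<mu> i) (dsupp (\<mu> i)) = 1)"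

text \<open>Expected subjective payoff of type theta of player i playing sigma against s
  (no observability).\<close>
definition exp_payoff :: "('i::finite \<Rightarrow> 'a set) \<Rightarrow> ('i \<Rightarrow> ('i, 'a) pref \<Rightarrow> real)
    \<Rightarrow> ('i \<Rightarrow> ('i, 'a) pref \<Rightarrow> 'a \<Rightarrow> real) \<Rightarrow> 'i \<Rightarrow> ('i, 'a) pref \<Rightarrow> ('a \<Rightarrow> real) \<Rightarrow> real" where
  "exp_payoff A \<mu> s i \<theta> \<sigma> =
     (\<Sum>\<theta>'\<in>Pi\<^sub>E (UNIV - {i}) (\<lambda>j. dsupp (\<mu> j)).
        (\<Prod>j\<in>UNIV - {i}. \<mu> j (\<theta>' j)) * mlin A \<theta> (\<lambda>j. if j = i then \<sigma> else s j (\<theta>' j)))"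

definition BNE :: "('i::finite \<Rightarrow> 'a set) \<Rightarrow> ('i \<Rightarrow> ('i, 'a) pref \<Rightarrow> real)
    \<Rightarrow> ('i \<Rightarrow> ('i, 'a) pref \<Rightarrow> 'a \<Rightarrow> real) \<Rightarrow> bool" where
  "BNE A \<mu> s = (\<forall>i. \<forall>\<theta>\<in>dsupp (\<mu> i). s i \<theta> \<in> simplex (A i) \<and>
      (\<forall>\<sigma>\<in>simplex (A i). exp_payoff A \<mu> s i \<theta> \<sigma> \<le> exp_payoff A \<mu> s i \<theta> (s i \<theta>)))"

definition agg :: "('i \<Rightarrow> ('i, 'a) pref \<Rightarrow> real) \<Rightarrow> ('i \<Rightarrow> ('i, 'a) pref \<Rightarrow> 'a \<Rightarrow> real) \<Rightarrow> 'i \<Rightarrow> 'a \<Rightarrow> real" where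
  "agg \<mu> s i = (\<lambda>a. \<Sum>\<theta>\<in>dsupp (\<mu> i). \<mu> i \<theta> * s i \<theta> a)"

definition avg_fit :: "('i::finite \<Rightarrow> 'a set) \<Rightarrow> ('i \<Rightarrow> ('i, 'a) pref) \<Rightarrow> ('i \<Rightarrow> ('i, 'a) pref \<Rightarrow> real)
    \<Rightarrow> ('i \<Rightarrow> ('i, 'a) pref \<Rightarrow> 'a \<Rightarrow> real) \<Rightarrow> 'i \<Rightarrow> ('i, 'a) pref \<Rightarrow> real" where
  "avg_fit A \<pi> \<mu> s i \<theta> = mlin A (\<pi> i) (\<lambda>j. if j = i then s i \<theta> else agg \<mu> s j)"

definition balanced :: "('i::finite \<Rightarrow> 'a set) \<Rightarrow> ('i \<Rightarrow> ('i, 'a) pref) \<Rightarrow> ('i \<Rightarrow> ('i, 'a) pref \<Rightarrow> real)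
    \<Rightarrow> ('i \<Rightarrow> ('i, 'a) pref \<Rightarrow> 'a \<Rightarrow> real) \<Rightarrow> bool" where
  "balanced A \<pi> \<mu> s = (\<forall>i. \<forall>\<theta>\<in>dsupp (\<mu> i). \<forall>\<theta>'\<in>dsupp (\<mu> i).
      avg_fit A \<pi> \<mu> s i \<theta> = avg_fit A \<pi> \<mu> s i \<theta>')"

definition post_entry :: "('i \<Rightarrow> ('i, 'a) pref \<Rightarrow> real) \<Rightarrow> 'i set \<Rightarrow> ('i \<Rightarrow> ('i, 'a) pref)
    \<Rightarrow> ('i \<Rightarrow> real) \<Rightarrow> 'i \<Rightarrow> ('i, 'a) pref \<Rightarrow> real" where
  "post_entry \<mu> J m \<epsilon> i = (if i \<in> J
      then (\<lambda>t. (1 - \<epsilon> i) * \<mu> i t + \<epsilon> i * (if t = m i then 1 else 0)) else \<mu> i)"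

definition mdist :: "('i \<Rightarrow> 'a set) \<Rightarrow> 'i \<Rightarrow> ('a \<Rightarrow> real) \<Rightarrow> ('a \<Rightarrow> real) \<Rightarrow> real" where
  "mdist A i \<sigma> \<tau> = sqrt (\<Sum>a\<in>A i. (\<sigma> a - \<tau> a)\<^sup>2)"

definition nearby :: "('i::finite \<Rightarrow> 'a set) \<Rightarrow> ('i \<Rightarrow> ('i, 'a) pref \<Rightarrow> real) \<Rightarrow> ('i \<Rightarrow> ('i, 'a) pref \<Rightarrow> real)
    \<Rightarrow> ('i \<Rightarrow> ('i, 'a) pref \<Rightarrow> 'a \<Rightarrow> real) \<Rightarrow> real \<Rightarrow> ('i \<Rightarrow> ('i, 'a) pref \<Rightarrow> 'a \<Rightarrow> real) set" where
  "nearby A \<mu>' \<mu> s \<eta> = {s'. BNE A \<mu>' s' \<and>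
      (\<forall>\<theta>\<in>Pi\<^sub>E UNIV (\<lambda>i. dsupp (\<mu> i)). (MAX i. mdist A i (s' i (\<theta> i)) (s i (\<theta> i))) \<le> \<eta>)}"

definition stable_config :: "('i::finite \<Rightarrow> 'a set) \<Rightarrow> ('i \<Rightarrow> ('i, 'a) pref) \<Rightarrow> ('i \<Rightarrow> ('i, 'a) pref \<Rightarrow> real)
    \<Rightarrow> ('i \<Rightarrow> ('i, 'a) pref \<Rightarrow> 'a \<Rightarrow> real) \<Rightarrow> bool" where
  "stable_config A \<pi> \<mu> s = (balanced A \<pi> \<mu> s \<and>
     (\<forall>J m. J \<noteq> {} \<and> (\<forall>j\<in>J. m j \<in> Theta A \<and> m j \<notin> dsupp (\<mu> j)) \<longrightarrow>
       (\<forall>\<eta>>0. \<exists>\<eta>b \<epsilon>b. 0 \<le> \<eta>b \<and> \<eta>b < \<eta> \<and> 0 < \<epsilon>b \<and> \<epsilon>b < 1 \<and>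
         (\<forall>\<epsilon>. (\<forall>j\<in>J. 0 < \<epsilon> j \<and> \<epsilon> j < 1) \<and> Max (\<epsilon> ` J) < \<epsilon>b \<longrightarrow>
            nearby A (post_entry \<mu> J m \<epsilon>) \<mu> s \<eta>b \<noteq> {} \<and>
            (\<forall>s'\<in>nearby A (post_entry \<mu> J m \<epsilon>) \<mu> s \<eta>b.
               (\<exists>j\<in>J. \<forall>\<theta>\<in>dsupp (\<mu> j).
                  avg_fit A \<pi> (post_entry \<mu> J m \<epsilon>) s' j \<theta> > avg_fit A \<pi> (post_entry \<mu> J m \<epsilon>) s' j (m j))
               \<or> balanced A \<pi> (post_entry \<mu> J m \<epsilon>) s')))))"

definition nash :: "('i::finite \<Rightarrow> 'a set) \<Rightarrow> ('i \<Rightarrow> ('i, 'a) pref) \<Rightarrow> ('i \<Rightarrow> 'a \<Rightarrow> real) \<Rightarrow> bool" where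
  "nash A \<pi> x = ((\<forall>i. x i \<in> simplex (A i)) \<and>
     (\<forall>i. \<forall>\<sigma>\<in>simplex (A i). mlin A (\<pi> i) (\<lambda>j. if j = i then \<sigma> else x j) \<le> mlin A (\<pi> i) x))"

end

theory Submission imports Defs begin

lemma prod_split_i:
  fixes g :: "'i::finite \<Rightarrow> real"
  shows "(\<Prod>k\<in>UNIV. g k) = g i * (\<Prod>k\<in>UNIV-{i}. g k)"
  by (metis finite UNIV_I prod.remove)

lemma mlin_lin:
  fixes A :: "'i::finite \<Rightarrow> 'a set"
  assumes "finite S"
  shows "mlin A u (\<lambda>j. if j=i then (\<lambda>a. \<Sum>\<theta>\<in>S. w \<theta> * f \<theta> a) else y j)
       = (\<Sum>\<theta>\<in>S. w \<theta> * mlin A u (\<lambda>j. if j=i then f \<theta> else y j))"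
proof -
  have "mlin A u (\<lambda>j. if j=i then (\<lambda>a. \<Sum>\<theta>\<in>S. w \<theta> * f \<theta> a) else y j)
     = (\<Sum>b\<in>Pi\<^sub>E UNIV A. (\<Sum>\<theta>\<in>S. w \<theta> * f \<theta> (b i)) * (\<Prod>k\<in>UNIV-{i}. y k (b k)) * u b)"
    unfolding mlin_def
    by (intro sum.cong refl, subst prod_split_i[where i=i], simp)
  also have "\<dots> = (\<Sum>b\<in>Pi\<^sub>E UNIV A. \<Sum>\<theta>\<in>S. w \<theta> * (f \<theta> (b i) * (\<Prod>k\<in>UNIV-{i}. y k (b k)) * u b))"
    by (simp add: sum_distrib_right mult.assoc)
  also have "\<dots> = (\<Sum>\<theta>\<in>S. w \<theta> * (\<Sum>b\<in>Pi\<^sub>E UNIV A. f \<theta> (b i) * (\<Prod>k\<in>UNIV-{i}. y k (b k)) * u b))"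
    by (subst sum.swap) (simp add: sum_distrib_left)
  also have "\<dots> = (\<Sum>\<theta>\<in>S. w \<theta> * mlin A u (\<lambda>j. if j=i then f \<theta> else y j))"
    unfolding mlin_def
    by (intro sum.cong refl arg_cong[where f="\<lambda>x. w _ * x"], subst prod_split_i[where i=i], simp)
  finally show ?thesis .
qed

lemma exp_payoff_mlin:
  fixes A :: "'i::finite \<Rightarrow> 'a set"
  assumes fin: "\<And>j. finite (dsupp (\<nu> j))"
  shows "exp_payoff A \<nu> s i \<theta> \<sigma> = mlin A \<theta> (\<lambda>j. if j = i then \<sigma> else agg \<nu> s j)"
proof -
  let ?P = "Pi\<^sub>E (UNIV - {i}) (\<lambda>j. dsupp (\<nu> j))"
  have "exp_payoff A \<nu> s i \<theta> \<sigma> =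
     (\<Sum>\<theta>'\<in>?P. \<Sum>b\<in>Pi\<^sub>E UNIV A. \<sigma> (b i) * \<theta> b * ((\<Prod>j\<in>UNIV - {i}. \<nu> j (\<theta>' j)) * (\<Prod>k\<in>UNIV-{i}. s k (\<theta>' k) (b k))))"
    unfolding exp_payoff_def mlin_def
    apply (intro sum.cong refl)
    apply (subst sum_distrib_left)
    apply (intro sum.cong refl)
    apply (subst prod_split_i[where i=i])
    apply simp
    done
  also have "\<dots> = (\<Sum>b\<in>Pi\<^sub>E UNIV A. \<sigma> (b i) * \<theta> b * (\<Sum>\<theta>'\<in>?P. \<Prod>j\<in>UNIV - {i}. \<nu> j (\<theta>' j) * s j (\<theta>' j) (b j)))"
    by (subst sum.swap) (simp add: sum_distrib_left prod.distrib)
  also have "\<dots> = (\<Sum>b\<in>Pi\<^sub>E UNIV A. \<sigma> (b i) * \<theta> b * (\<Prod>j\<in>UNIV - {i}. agg \<nu> s j (b j)))"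
    apply (intro sum.cong refl arg_cong[where f="\<lambda>x. _ * x"])
    unfolding agg_def
    by (subst prod_sum_PiE) (auto simp: fin)
  also have "\<dots> = mlin A \<theta> (\<lambda>j. if j = i then \<sigma> else agg \<nu> s j)"
    unfolding mlin_def
    by (intro sum.cong refl, subst prod_split_i[where i=i], simp)
  finally show ?thesis .
qed


lemma pe_other: "j \<noteq> i \<Longrightarrow> post_entry \<mu> {i} m \<epsilon> j = \<mu> j"
  by (simp add: post_entry_def)

lemma pe_i: "post_entry \<mu> {i} m \<epsilon> i t = (1 - \<epsilon> i) * \<mu> i t + \<epsilon> i * (if t = m i then 1 else 0)"
  by (simp add: post_entry_def)

lemma pe_supp_res:
  assumes "\<theta> \<in> dsupp (\<mu> k)" "mt \<notin> dsupp (\<mu> i)" "e < 1"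
  shows "\<theta> \<in> dsupp (post_entry \<mu> {i} (\<lambda>_. mt) (\<lambda>_. e) k)"
proof (cases "k = i")
  case True
  then have "\<theta> \<noteq> mt" using assms by auto
  then show ?thesis using assms True by (simp add: dsupp_def post_entry_def)
next
  case False
  then show ?thesis using assms by (simp add: pe_other)
qed

lemma pe_supp_mut:
  assumes "mt \<notin> dsupp (\<mu> i)" "0 < e"
  shows "mt \<in> dsupp (post_entry \<mu> {i} (\<lambda>_. mt) (\<lambda>_. e) i)"
  using assms by (simp add: dsupp_def post_entry_def)

lemma pe_fin:
  assumes "\<And>j. finite (dsupp (\<mu> j))"
  shows "finite (dsupp (post_entry \<mu> {i} (\<lambda>_. mt) (\<lambda>_. e) k))"
proof (cases "k = i")
  case True
  have "dsupp (post_entry \<mu> {i} (\<lambda>_. mt) (\<lambda>_. e) k) \<subseteq> insert mt (dsupp (\<mu> i))"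
    using True by (auto simp: dsupp_def post_entry_def)
  then show ?thesis using assms finite_subset by blast
next
  case False
  then show ?thesis using assms by (simp add: pe_other)
qed

lemma agg_pe_other: "j \<noteq> i \<Longrightarrow> agg (post_entry \<mu> {i} m \<epsilon>) s j = agg \<mu> s j"
  by (simp add: agg_def pe_other)

lemma slot_eq:
  "(\<lambda>j. if j = i then X else agg (post_entry \<mu> {i} m \<epsilon>) s j) = (\<lambda>j. if j = i then X else agg \<mu> s j)"
  by (rule ext) (simp add: agg_pe_other)

lemma step:
  fixes A :: "'i::finite \<Rightarrow> 'a set"
  assumes fin: "\<And>j. finite (dsupp (\<mu> j))"
    and nn: "\<And>t. 0 \<le> \<mu> i t" and s1: "sum (\<mu> i) (dsupp (\<mu> i)) = 1"
    and mt: "mt \<notin> dsupp (\<mu> i)"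
    and mtl: "\<And>y. mlin A mt y = k * mlin A (\<pi> i) y" and kpos: "0 < k"
    and e: "0 < e" "e < 1"
    and pe: "pe = post_entry \<mu> {i} (\<lambda>_. mt) (\<lambda>_. e)"
    and bne: "BNE A pe s'"
    and out: "(\<exists>j\<in>{i}. \<forall>\<theta>\<in>dsupp (\<mu> j). avg_fit A \<pi> pe s' j \<theta> > avg_fit A \<pi> pe s' j mt)
              \<or> balanced A \<pi> pe s'"
    and \<sigma>: "\<sigma> \<in> simplex (A i)"
  shows "mlin A (\<pi> i) (\<lambda>j. if j=i then \<sigma> else agg \<mu> s' j) \<le> mlin A (\<pi> i) (agg \<mu> s')"
proof -
  define F where "F \<theta> = mlin A (\<pi> i) (\<lambda>j. if j=i then s' i \<theta> else agg \<mu> s' j)" for \<theta>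
  have fitF: "avg_fit A \<pi> pe s' i \<theta> = F \<theta>" for \<theta>
    unfolding avg_fit_def F_def pe by (simp add: slot_eq)
  have mts: "mt \<in> dsupp (pe i)" using pe_supp_mut[where mt=mt and \<mu>=\<mu> and i=i, OF mt e(1)] pe by simp
  have finpe: "finite (dsupp (pe j))" for j using pe_fin[OF fin] pe by simp
  have eqp: "exp_payoff A pe s' i mt \<tau> = k * mlin A (\<pi> i) (\<lambda>j. if j=i then \<tau> else agg \<mu> s' j)" for \<tau>
  proof -
    have "exp_payoff A pe s' i mt \<tau> = mlin A mt (\<lambda>j. if j=i then \<tau> else agg pe s' j)"
      by (rule exp_payoff_mlin[OF finpe])
    also have "\<dots> = k * mlin A (\<pi> i) (\<lambda>j. if j=i then \<tau> else agg \<mu> s' j)"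
      unfolding mtl pe slot_eq ..
    finally show ?thesis .
  qed
  have "exp_payoff A pe s' i mt \<sigma> \<le> exp_payoff A pe s' i mt (s' i mt)"
    using bne mts \<sigma> unfolding BNE_def by blast
  then have "k * mlin A (\<pi> i) (\<lambda>j. if j=i then \<sigma> else agg \<mu> s' j) \<le> k * F mt"
    using eqp[of \<sigma>] eqp[of "s' i mt"] unfolding F_def by linarith
  then have c1: "mlin A (\<pi> i) (\<lambda>j. if j=i then \<sigma> else agg \<mu> s' j) \<le> F mt"
    using kpos by simp
  have c2: "F mt \<le> F \<theta>" if "\<theta> \<in> dsupp (\<mu> i)" for \<theta>
    using out
  proof
    assume "\<exists>j\<in>{i}. \<forall>\<theta>\<in>dsupp (\<mu> j). avg_fit A \<pi> pe s' j \<theta> > avg_fit A \<pi> pe s' j mt"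
    then show ?thesis using that fitF by (metis less_imp_le singletonD)
  next
    assume "balanced A \<pi> pe s'"
    moreover have "\<theta> \<in> dsupp (pe i)" using pe_supp_res[where \<mu>=\<mu> and k=i and i=i, OF that mt e(2)] pe by simp
    ultimately show ?thesis using mts fitF unfolding balanced_def by (metis order_refl)
  qed
  have "agg \<mu> s' = (\<lambda>j. if j = i then (\<lambda>a. \<Sum>\<theta>\<in>dsupp (\<mu> i). \<mu> i \<theta> * s' i \<theta> a) else agg \<mu> s' j)"
    by (rule ext) (simp add: agg_def)
  then have "mlin A (\<pi> i) (agg \<mu> s') = mlin A (\<pi> i) (\<lambda>j. if j = i then (\<lambda>a. \<Sum>\<theta>\<in>dsupp (\<mu> i). \<mu> i \<theta> * s' i \<theta> a) else agg \<mu> s' j)"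
    by (rule arg_cong)
  also have "\<dots> = (\<Sum>\<theta>\<in>dsupp (\<mu> i). \<mu> i \<theta> * F \<theta>)"
    unfolding F_def by (rule mlin_lin[OF fin])
  also have "\<dots> \<ge> (\<Sum>\<theta>\<in>dsupp (\<mu> i). \<mu> i \<theta> * F mt)"
    by (intro sum_mono mult_left_mono c2 nn)
  also have "(\<Sum>\<theta>\<in>dsupp (\<mu> i). \<mu> i \<theta> * F mt) = F mt"
    using s1 by (simp add: sum_distrib_right[symmetric])
  finally show ?thesis using c1 by linarith
qed


lemma conv_bound:
  fixes f :: "nat \<Rightarrow> real"
  assumes "\<And>n. \<bar>f n - L\<bar> \<le> 1 / (real n + 1)"
  shows "f \<longlonglongrightarrow> L"
proof -
  have "(\<lambda>n. 1 / (real n + 1)) \<longlonglongrightarrow> 0"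
    using LIMSEQ_inverse_real_of_nat by (simp add: inverse_eq_divide add.commute)
  then have l1: "(\<lambda>n. L - 1 / (real n + 1)) \<longlonglongrightarrow> L" and l2: "(\<lambda>n. L + 1 / (real n + 1)) \<longlonglongrightarrow> L"
    using tendsto_diff[OF tendsto_const] tendsto_add[OF tendsto_const] by fastforce+
  show ?thesis
    by (rule real_tendsto_sandwich[OF _ _ l1 l2]) (use assms in \<open>auto simp: abs_le_iff intro!: always_eventually\<close>, smt (verit) assms abs_le_iff, smt (verit) assms abs_le_iff)
qed

lemma mlin_tendsto:
  fixes A :: "'i::finite \<Rightarrow> 'a set"
  assumes "\<And>j a. (\<lambda>n. F n j a) \<longlonglongrightarrow> G j a"
  shows "(\<lambda>n. mlin A u (F n)) \<longlonglongrightarrow> mlin A u G"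
  unfolding mlin_def by (intro tendsto_intros assms)

lemma bound:
  fixes A :: "'i::finite \<Rightarrow> 'a set"
  assumes ne: "\<And>j. dsupp (\<mu> j) \<noteq> {}"
    and sn: "s' \<in> nearby A \<nu> \<mu> s \<eta>" and th: "\<theta> \<in> dsupp (\<mu> k)" and a: "a \<in> A k"
    and finA: "finite (A k)"
  shows "\<bar>s' k \<theta> a - s k \<theta> a\<bar> \<le> \<eta>"
proof -
  define p where "p j = (if j = k then \<theta> else (SOME t. t \<in> dsupp (\<mu> j)))" for j
  have p: "p \<in> Pi\<^sub>E UNIV (\<lambda>i. dsupp (\<mu> i))"
    using th ne by (auto simp: p_def some_in_eq)
  have "(MAX i. mdist A i (s' i (p i)) (s i (p i))) \<le> \<eta>"
    using sn p unfolding nearby_def by blast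
  moreover have "mdist A k (s' k \<theta>) (s k \<theta>) \<le> (MAX i. mdist A i (s' i (p i)) (s i (p i)))"
  proof -
    have "mdist A k (s' k (p k)) (s k (p k)) \<le> (MAX i. mdist A i (s' i (p i)) (s i (p i)))"
      by (rule Max_ge) auto
    then show ?thesis by (simp add: p_def)
  qed
  moreover have "\<bar>s' k \<theta> a - s k \<theta> a\<bar> \<le> mdist A k (s' k \<theta>) (s k \<theta>)"
  proof -
    have "(s' k \<theta> a - s k \<theta> a)\<^sup>2 \<le> (\<Sum>b\<in>A k. (s' k \<theta> b - s k \<theta> b)\<^sup>2)"
      by (rule member_le_sum) (use a finA in auto)
    then have "sqrt ((s' k \<theta> a - s k \<theta> a)\<^sup>2) \<le> mdist A k (s' k \<theta>) (s k \<theta>)"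
      unfolding mdist_def using real_sqrt_le_mono by blast
    then show ?thesis by simp
  qed
  ultimately show ?thesis by linarith
qed


theorem mainTheorem10:
  fixes A :: "'i::finite \<Rightarrow> 'a set"
    and \<pi> :: "'i \<Rightarrow> ('i, 'a) pref"
    and \<mu> :: "'i \<Rightarrow> ('i, 'a) pref \<Rightarrow> real"
    and s :: "'i \<Rightarrow> ('i, 'a) pref \<Rightarrow> 'a \<Rightarrow> real"
  assumes "\<And>i. finite (A i)"
    and "\<And>i. A i \<noteq> {}"
    and "is_dist A \<mu>"
    and "BNE A \<mu> s"
    and "stable_config A \<pi> \<mu> s"
  shows "nash A \<pi> (agg \<mu> s)"
proof -
  note finA = assms(1) and bne = assms(4)
  have fin: "\<And>j. finite (dsupp (\<mu> j))" and nn: "\<And>j t. 0 \<le> \<mu> j t"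
    and s1: "\<And>j. sum (\<mu> j) (dsupp (\<mu> j)) = 1"
    using assms(3) unfolding is_dist_def by auto
  have ne: "dsupp (\<mu> j) \<noteq> {}" for j using s1[of j] by auto
  have ssimp: "s j \<theta> \<in> simplex (A j)" if "\<theta> \<in> dsupp (\<mu> j)" for j \<theta>
    using bne that unfolding BNE_def by blast
  have part1: "agg \<mu> s i \<in> simplex (A i)" for i
  proof -
    have "(\<Sum>a\<in>A i. agg \<mu> s i a) = (\<Sum>\<theta>\<in>dsupp (\<mu> i). \<mu> i \<theta> * (\<Sum>a\<in>A i. s i \<theta> a))"
      unfolding agg_def by (subst sum.swap) (simp add: sum_distrib_left)
    also have "\<dots> = (\<Sum>\<theta>\<in>dsupp (\<mu> i). \<mu> i \<theta>)"
      using ssimp by (intro sum.cong refl) (simp add: simplex_def)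
    finally have "(\<Sum>a\<in>A i. agg \<mu> s i a) = 1" using s1 by simp
    moreover have "0 \<le> agg \<mu> s i a" for a
      unfolding agg_def using ssimp nn by (intro sum_nonneg mult_nonneg_nonneg) (auto simp: simplex_def)
    moreover have "agg \<mu> s i a = 0" if "a \<notin> A i" for a
      unfolding agg_def using ssimp that by (intro sum.neutral) (auto simp: simplex_def)
    ultimately show ?thesis unfolding simplex_def by auto
  qed
  have part2: "mlin A (\<pi> i) (\<lambda>j. if j = i then \<sigma> else agg \<mu> s j) \<le> mlin A (\<pi> i) (agg \<mu> s)"
    if \<sigma>: "\<sigma> \<in> simplex (A i)" for i \<sigma>
  proof (rule ccontr)
    assume gt0: "\<not> ?thesis"
    then have gt: "mlin A (\<pi> i) (agg \<mu> s) < mlin A (\<pi> i) (\<lambda>j. if j = i then \<sigma> else agg \<mu> s j)"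
      by simp
    define v where "v b = (if b \<in> Pi\<^sub>E UNIV A then \<pi> i b else 0)" for b
    have mlin_v: "mlin A v y = mlin A (\<pi> i) y" for y
      unfolding mlin_def v_def by (intro sum.cong refl) simp
    obtain b0 where b0: "v b0 \<noteq> 0"
    proof (cases "\<exists>b. v b \<noteq> 0")
      case True then show ?thesis using that by blast
    next
      case False
      then have "v = (\<lambda>_. 0)" by auto
      then have "mlin A (\<pi> i) y = 0" for y using mlin_v[of y] by (simp add: mlin_def)
      then show ?thesis using gt by simp
    qed
    define T where "T c = (\<lambda>b. real (Suc c) * v b)" for c
    have "inj T"
    proof (rule injI)
      fix c d assume "T c = T d"
      then have "real (Suc c) * v b0 = real (Suc d) * v b0" unfolding T_def by meson
      then show "c = d" using b0 by simp
    qed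
    then have "infinite (range T)" using finite_imageD by blast
    then obtain c where c: "T c \<notin> dsupp (\<mu> i)"
    proof -
      have "\<not> range T \<subseteq> dsupp (\<mu> i)" using fin[of i] \<open>infinite (range T)\<close> finite_subset by blast
      then show ?thesis using that by blast
    qed
    define mt where "mt = T c"
    define k where "k = real (Suc c)"
    have kpos: "0 < k" by (simp add: k_def)
    have mtl: "mlin A mt y = k * mlin A (\<pi> i) y" for y
      unfolding mlin_v[symmetric] mlin_def mt_def T_def k_def by (simp add: sum_distrib_left mult_ac v_def)
    have mtT: "mt \<in> Theta A" unfolding Theta_def mt_def T_def v_def by auto
    have mtn: "mt \<notin> dsupp (\<mu> i)" using c mt_def by simp
    define pe where "pe e = post_entry \<mu> {i} (\<lambda>_. mt) (\<lambda>_. e)" for e :: real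
    from assms(5) have st: "\<forall>\<eta>>0. \<exists>\<eta>b \<epsilon>b. 0 \<le> \<eta>b \<and> \<eta>b < \<eta> \<and> 0 < \<epsilon>b \<and> \<epsilon>b < 1 \<and>
         (\<forall>\<epsilon>. (\<forall>j\<in>{i}. 0 < \<epsilon> j \<and> \<epsilon> j < 1) \<and> Max (\<epsilon> ` {i}) < \<epsilon>b \<longrightarrow>
            nearby A (post_entry \<mu> {i} (\<lambda>_. mt) \<epsilon>) \<mu> s \<eta>b \<noteq> {} \<and>
            (\<forall>s'\<in>nearby A (post_entry \<mu> {i} (\<lambda>_. mt) \<epsilon>) \<mu> s \<eta>b.
               (\<exists>j\<in>{i}. \<forall>\<theta>\<in>dsupp (\<mu> j).
                  avg_fit A \<pi> (post_entry \<mu> {i} (\<lambda>_. mt) \<epsilon>) s' j \<theta> > avg_fit A \<pi> (post_entry \<mu> {i} (\<lambda>_. mt) \<epsilon>) s' j mt)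
               \<or> balanced A \<pi> (post_entry \<mu> {i} (\<lambda>_. mt) \<epsilon>) s'))"
    proof -
      have H: "\<forall>J m. J \<noteq> {} \<and> (\<forall>j\<in>J. m j \<in> Theta A \<and> m j \<notin> dsupp (\<mu> j)) \<longrightarrow>
       (\<forall>\<eta>>0. \<exists>\<eta>b \<epsilon>b. 0 \<le> \<eta>b \<and> \<eta>b < \<eta> \<and> 0 < \<epsilon>b \<and> \<epsilon>b < 1 \<and>
         (\<forall>\<epsilon>. (\<forall>j\<in>J. 0 < \<epsilon> j \<and> \<epsilon> j < 1) \<and> Max (\<epsilon> ` J) < \<epsilon>b \<longrightarrow>
            nearby A (post_entry \<mu> J m \<epsilon>) \<mu> s \<eta>b \<noteq> {} \<and>
            (\<forall>s'\<in>nearby A (post_entry \<mu> J m \<epsilon>) \<mu> s \<eta>b.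
               (\<exists>j\<in>J. \<forall>\<theta>\<in>dsupp (\<mu> j).
                  avg_fit A \<pi> (post_entry \<mu> J m \<epsilon>) s' j \<theta> > avg_fit A \<pi> (post_entry \<mu> J m \<epsilon>) s' j (m j))
               \<or> balanced A \<pi> (post_entry \<mu> J m \<epsilon>) s')))"
        using assms(5) unfolding stable_config_def by (rule conjunct2)
      have pre: "{i} \<noteq> {} \<and> (\<forall>j\<in>{i}. mt \<in> Theta A \<and> mt \<notin> dsupp (\<mu> j))"
        using mtT mtn by simp
      note H1 = spec[where x="\<lambda>_. mt", OF spec[where x="{i}", OF H]]
      show ?thesis by (rule mp[OF H1 pre])
    qed
    have ex: "\<exists>e s' h. 0 < e \<and> e < 1 \<and> h \<le> 1 / (real n + 1) \<and> s' \<in> nearby A (pe e) \<mu> s h \<and>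
        ((\<exists>j\<in>{i}. \<forall>\<theta>\<in>dsupp (\<mu> j). avg_fit A \<pi> (pe e) s' j \<theta> > avg_fit A \<pi> (pe e) s' j mt)
               \<or> balanced A \<pi> (pe e) s')" for n
    proof -
      have "(0::real) < 1 / (real n + 1)" by simp
      then obtain \<eta>b \<epsilon>b where h: "0 \<le> \<eta>b" "\<eta>b < 1 / (real n + 1)" "0 < \<epsilon>b" "\<epsilon>b < 1"
        and P: "\<forall>\<epsilon>. (\<forall>j\<in>{i}. 0 < \<epsilon> j \<and> \<epsilon> j < 1) \<and> Max (\<epsilon> ` {i}) < \<epsilon>b \<longrightarrow>
            nearby A (post_entry \<mu> {i} (\<lambda>_. mt) \<epsilon>) \<mu> s \<eta>b \<noteq> {} \<and>
            (\<forall>s'\<in>nearby A (post_entry \<mu> {i} (\<lambda>_. mt) \<epsilon>) \<mu> s \<eta>b.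
               (\<exists>j\<in>{i}. \<forall>\<theta>\<in>dsupp (\<mu> j).
                  avg_fit A \<pi> (post_entry \<mu> {i} (\<lambda>_. mt) \<epsilon>) s' j \<theta> > avg_fit A \<pi> (post_entry \<mu> {i} (\<lambda>_. mt) \<epsilon>) s' j mt)
               \<or> balanced A \<pi> (post_entry \<mu> {i} (\<lambda>_. mt) \<epsilon>) s')"
        using mp[OF spec[where x="1 / (real n + 1)", OF st] \<open>(0::real) < 1 / (real n + 1)\<close>]
        by (elim exE conjE) (rule that)
      define e where "e = \<epsilon>b / 2"
      have e: "0 < e" "e < 1" "e < \<epsilon>b" using h by (auto simp: e_def)
      have "(\<forall>j\<in>{i}. 0 < (\<lambda>_. e) j \<and> (\<lambda>_. e) j < 1) \<and> Max ((\<lambda>_. e) ` {i}) < \<epsilon>b"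
        using e by simp
      from P[rule_format, OF this] obtain s' where "s' \<in> nearby A (pe e) \<mu> s \<eta>b" and
        "(\<exists>j\<in>{i}. \<forall>\<theta>\<in>dsupp (\<mu> j). avg_fit A \<pi> (pe e) s' j \<theta> > avg_fit A \<pi> (pe e) s' j mt)
               \<or> balanced A \<pi> (pe e) s'"
        unfolding pe_def by blast
      moreover have "\<eta>b \<le> 1 / (real n + 1)" using h by simp
      ultimately show ?thesis using e
        by (intro exI[of _ e] exI[of _ s'] exI[of _ \<eta>b] conjI)
    qed
    then obtain E S' H where EH: "\<And>n. 0 < E n \<and> E n < 1 \<and> H n \<le> 1 / (real n + 1) \<and> S' n \<in> nearby A (pe (E n)) \<mu> s (H n) \<and>
        ((\<exists>j\<in>{i}. \<forall>\<theta>\<in>dsupp (\<mu> j). avg_fit A \<pi> (pe (E n)) (S' n) j \<theta> > avg_fit A \<pi> (pe (E n)) (S' n) j mt)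
               \<or> balanced A \<pi> (pe (E n)) (S' n))"
      by metis
    have ineq: "mlin A (\<pi> i) (\<lambda>j. if j=i then \<sigma> else agg \<mu> (S' n) j) \<le> mlin A (\<pi> i) (agg \<mu> (S' n))" for n
    proof -
      have e1: "0 < E n" and e2: "E n < 1" using EH[of n] by blast+
      have bn: "BNE A (pe (E n)) (S' n)" using EH[of n] unfolding nearby_def by blast
      have on: "(\<exists>j\<in>{i}. \<forall>\<theta>\<in>dsupp (\<mu> j). avg_fit A \<pi> (pe (E n)) (S' n) j \<theta> > avg_fit A \<pi> (pe (E n)) (S' n) j mt)
               \<or> balanced A \<pi> (pe (E n)) (S' n)" using EH[of n] by blast
      show ?thesis
        by (rule step[where \<mu>=\<mu> and i=i and A=A and \<pi>=\<pi> and mt=mt and k=k and e="E n" and pe="pe (E n)"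
             and s'="S' n" and \<sigma>=\<sigma>, OF fin nn s1 mtn mtl kpos e1 e2 pe_def[of "E n"] bn on \<sigma>])
    qed
    have conv: "(\<lambda>n. S' n k \<theta> a) \<longlonglongrightarrow> s k \<theta> a" if th: "\<theta> \<in> dsupp (\<mu> k)" for k \<theta> a
    proof (cases "a \<in> A k")
      case True
      show ?thesis
      proof (rule conv_bound)
        fix n
        have "S' n \<in> nearby A (pe (E n)) \<mu> s (H n)" using EH[of n] by blast
        then have "\<bar>S' n k \<theta> a - s k \<theta> a\<bar> \<le> H n"
          by (rule bound[where \<mu>=\<mu> and k=k and A=A, OF ne _ th True finA])
        then show "\<bar>S' n k \<theta> a - s k \<theta> a\<bar> \<le> 1 / (real n + 1)" using EH[of n] by linarith
      qed
    next
      case False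
      have "S' n k \<theta> a = 0" for n
      proof -
        have "BNE A (pe (E n)) (S' n)" using EH[of n] by (simp add: nearby_def)
        moreover have "\<theta> \<in> dsupp (pe (E n) k)"
          unfolding pe_def using pe_supp_res[OF th mtn] EH[of n] by blast
        ultimately have "S' n k \<theta> \<in> simplex (A k)" unfolding BNE_def by blast
        then show ?thesis using False by (simp add: simplex_def)
      qed
      moreover have "s k \<theta> a = 0" using ssimp[OF th] False by (simp add: simplex_def)
      ultimately show ?thesis by simp
    qed
    have cagg: "(\<lambda>n. agg \<mu> (S' n) j a) \<longlonglongrightarrow> agg \<mu> s j a" for j a
      unfolding agg_def by (intro tendsto_intros conv)
    have L1: "(\<lambda>n. mlin A (\<pi> i) (agg \<mu> (S' n))) \<longlonglongrightarrow> mlin A (\<pi> i) (agg \<mu> s)"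
      by (rule mlin_tendsto) (rule cagg)
    have L2: "(\<lambda>n. mlin A (\<pi> i) (\<lambda>j. if j=i then \<sigma> else agg \<mu> (S' n) j))
        \<longlonglongrightarrow> mlin A (\<pi> i) (\<lambda>j. if j=i then \<sigma> else agg \<mu> s j)"
      by (rule mlin_tendsto) (auto intro: cagg)
    have "mlin A (\<pi> i) (\<lambda>j. if j=i then \<sigma> else agg \<mu> s j) \<le> mlin A (\<pi> i) (agg \<mu> s)"
      using LIMSEQ_le[OF L2 L1] ineq by blast
    then show False using gt by simp
  qed
  show ?thesis unfolding nash_def using part1 part2 by blast
qed

end
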